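(* Let $G$ be a graph with connected components $G_1,\ldots,G_k$, where $G_1,\ldots,G_i$ ($i\geq 0$) are isolated vertices and $G_{i+1},\ldots,G_k$ each have at least two vertices. Then \[ \operatorname{cdim}(G)=\max\{i-1,0\}+\sum_{j=i+1}^{k}\operatorname{cdim}(G_j). \]
   Context: All graphs are finite, simple, undirected and nonempty. For distinct vertices $v,w$ of a graph $G$, $\kappa(v,w)=\kappa_G(v,w)$ is the maximum number of internally vertex-disjoint $v$–$w$ paths in $G$ (so $\kappa(v,w)=0$ if $v,w$ lie in different components; if $v,w$ are adjacent the edge $vw$ counts as one such path); by convention $\kappa(v,v)=\infty$. For an ordered vertex set $W=(w_1,\ldots,w_k)$, the connectivity representation of $v$ is $r_G(v,W)=[\kappa(v,w_1),\ldots,\kappa(v,w_k)]$. $W$ is resolving for $G$ if $r_G(v_1,W)=r_G(v_2,W)$ implies $v_1=v_2$ for all $v_1,v_2\in V(G)$ (the empty set is resolving for the one-vertex graph). A resolving set of minimum cardinality is a (connectivity) basis, and the connectivity dimension $\operatorname{cdim}(G)$ is the cardinality of a basis. *)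

theory Defs
  imports Main "HOL-Library.Extended_Nat"
begin

definition graph :: "'a set \<Rightarrow> ('a \<times> 'a) set \<Rightarrow> bool" where
  "graph V E \<longleftrightarrow> finite V \<and> V \<noteq> {} \<and> E \<subseteq> V \<times> V \<and> sym E \<and> irrefl E"

definition is_path :: "'a set \<Rightarrow> ('a \<times> 'a) set \<Rightarrow> 'a \<Rightarrow> 'a \<Rightarrow> 'a list \<Rightarrow> bool" where
  "is_path V E v w p \<longleftrightarrow> p \<noteq> [] \<and> hd p = v \<and> last p = w \<and> distinct p \<and> set p \<subseteq> V \<and>
     (\<forall>i. Suc i < length p \<longrightarrow> (p ! i, p ! Suc i) \<in> E)"

definition internal :: "'a list \<Rightarrow> 'a set" where
  "internal p = set (butlast (tl p))"

definition disjoint_paths :: "'a set \<Rightarrow> ('a \<times> 'a) set \<Rightarrow> 'a \<Rightarrow> 'a \<Rightarrow> 'a list set \<Rightarrow> bool" where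
  "disjoint_paths V E v w P \<longleftrightarrow> finite P \<and> (\<forall>p\<in>P. is_path V E v w p) \<and>
     (\<forall>p\<in>P. \<forall>q\<in>P. p \<noteq> q \<longrightarrow> internal p \<inter> internal q = {})"

definition kappa :: "'a set \<Rightarrow> ('a \<times> 'a) set \<Rightarrow> 'a \<Rightarrow> 'a \<Rightarrow> enat" where
  "kappa V E v w = (if v = w then \<infinity> else enat (Max {card P | P. disjoint_paths V E v w P}))"

definition resolving :: "'a set \<Rightarrow> ('a \<times> 'a) set \<Rightarrow> 'a set \<Rightarrow> bool" where
  "resolving V E W \<longleftrightarrow> W \<subseteq> V \<and>
     (\<forall>v1\<in>V. \<forall>v2\<in>V. (\<forall>w\<in>W. kappa V E v1 w = kappa V E v2 w) \<longrightarrow> v1 = v2)"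

definition cdim :: "'a set \<Rightarrow> ('a \<times> 'a) set \<Rightarrow> nat" where
  "cdim V E = Min {card W | W. resolving V E W}"

definition components :: "'a set \<Rightarrow> ('a \<times> 'a) set \<Rightarrow> 'a set set" where
  "components V E = (\<lambda>v. {u \<in> V. (v, u) \<in> E\<^sup>*}) ` V"

definition induced_edges :: "('a \<times> 'a) set \<Rightarrow> 'a set \<Rightarrow> ('a \<times> 'a) set" where
  "induced_edges E C = E \<inter> (C \<times> C)"

end

theory Submission imports Defs begin

lemma path_reach:
  assumes "is_path V E v w p" "x \<in> set p"
  shows "(v,x) \<in> E\<^sup>*"
proof -
  have "\<forall>i. i < length p \<longrightarrow> (v, p!i) \<in> E\<^sup>*"
  proof (intro allI)
    fix i show "i < length p \<longrightarrow> (v, p!i) \<in> E\<^sup>*"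
    proof (induction i)
      case 0 then show ?case using assms(1) unfolding is_path_def by (simp add: hd_conv_nth[symmetric])
    next
      case (Suc i) then show ?case using assms(1) unfolding is_path_def
        by (meson Suc_lessD rtrancl.rtrancl_into_rtrancl)
    qed
  qed
  then show ?thesis using assms(2) by (metis in_set_conv_nth)
qed

lemma path_exists:
  assumes "(v,w) \<in> E\<^sup>*" "v \<in> V" "E \<subseteq> V \<times> V"
  shows "\<exists>p. is_path V E v w p"
  using assms(1)
proof (induction rule: rtrancl_induct)
  case base
  then show ?case using assms(2) by (intro exI[of _ "[v]"]) (simp add: is_path_def)
next
  case (step y z)
  then obtain p where p: "is_path V E v y p" by blast
  have zV: "z \<in> V" using step(2) assms(3) by auto
  show ?case
  proof (cases "z \<in> set p")
    case True
    then obtain k where k: "k < length p" "p!k = z" by (metis in_set_conv_nth)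
    have l: "last (take (Suc k) p) = z" using k by (subst last_conv_nth) (auto simp: min_def intro: arg_cong[where f="(!) p"])
    have "is_path V E v z (take (Suc k) p)"
      using p k l unfolding is_path_def
      by (auto simp: hd_take nth_take dest: in_set_takeD)
    then show ?thesis by blast
  next
    case False
    have "is_path V E v z (p @ [z])"
      unfolding is_path_def
    proof (intro conjI allI impI)
      fix i assume i: "Suc i < length (p @ [z])"
      show "((p @ [z]) ! i, (p @ [z]) ! Suc i) \<in> E"
      proof (cases "Suc i < length p")
        case True then show ?thesis using p unfolding is_path_def by (simp add: nth_append)
      next
        case False
        then have "i = length p - 1" "Suc i = length p" using i by auto
        moreover have "p ! (length p - 1) = y" using p unfolding is_path_def by (metis last_conv_nth)
        ultimately show ?thesis using step(2) p unfolding is_path_def by (simp add: nth_append)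
      qed
    qed (use p False zV in \<open>auto simp: is_path_def\<close>)
    then show ?thesis by blast
  qed
qed


definition comp :: "'a set \<Rightarrow> ('a \<times> 'a) set \<Rightarrow> 'a \<Rightarrow> 'a set" where
  "comp V E v = {u \<in> V. (v, u) \<in> E\<^sup>*}"

lemma components_comp: "components V E = comp V E ` V"
  unfolding components_def comp_def by simp

lemma comp_self: "v \<in> V \<Longrightarrow> v \<in> comp V E v"
  unfolding comp_def by simp

lemma comp_eq:
  assumes "sym E" "(u,v) \<in> E\<^sup>*"
  shows "comp V E u = comp V E v"
proof -
  have "(v,u) \<in> E\<^sup>*" using assms sym_rtrancl by (metis symD)
  then show ?thesis using assms(2) unfolding comp_def
    by (auto intro: rtrancl_trans)
qed

lemma comp_mem_eq:
  assumes "sym E" "x \<in> comp V E v"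
  shows "comp V E x = comp V E v"
  using assms comp_eq[of E v x V] unfolding comp_def by auto

lemma comp_eq_iff:
  assumes "sym E" "u \<in> V" "v \<in> V"
  shows "comp V E u = comp V E v \<longleftrightarrow> (u,v) \<in> E\<^sup>*"
  using assms comp_eq[of E u v V] comp_self[of v V E] unfolding comp_def by blast

lemma kappa_self: "kappa V E v v = \<infinity>" unfolding kappa_def by simp

lemma kappa_ne_inf: "v \<noteq> w \<Longrightarrow> kappa V E v w \<noteq> \<infinity>" unfolding kappa_def by simp

lemma kappa_zero:
  assumes "(v,w) \<notin> E\<^sup>*" "v \<noteq> w"
  shows "kappa V E v w = 0"
proof -
  have "disjoint_paths V E v w P \<Longrightarrow> P = {}" for P
  proof (rule ccontr)
    assume d: "disjoint_paths V E v w P" and "P \<noteq> {}"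
    then obtain p where "p \<in> P" by blast
    then have p: "is_path V E v w p" using d unfolding disjoint_paths_def by blast
    then have "w \<in> set p" unfolding is_path_def by auto
    then show False using path_reach[OF p] assms by blast
  qed
  note emp = this
  have d0: "disjoint_paths V E v w {}" by (simp add: disjoint_paths_def)
  have "{card P | P. disjoint_paths V E v w P} = {0}"
  proof (rule set_eqI, rule iffI)
    fix n assume "n \<in> {card P | P. disjoint_paths V E v w P}"
    then obtain P where "n = card P" "disjoint_paths V E v w P" by blast
    then show "n \<in> {0}" using emp by (metis card.empty singletonI)
  next
    fix n :: nat assume "n \<in> {0}"
    then have "n = card ({} :: 'a list set)" by simp
    then show "n \<in> {card P | P. disjoint_paths V E v w P}" using d0 by blast
  qed
  then show ?thesis unfolding kappa_def using assms by (simp add: zero_enat_def)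
qed

lemma kappa_nonzero:
  assumes "finite V" "E \<subseteq> V \<times> V" "v \<in> V" "(v,w) \<in> E\<^sup>*" "v \<noteq> w"
  shows "kappa V E v w \<noteq> 0"
proof -
  obtain p where p: "is_path V E v w p" using path_exists[OF assms(4) assms(3) assms(2)] by blast
  let ?Pth = "{p. is_path V E v w p}"
  have sub: "?Pth \<subseteq> {xs. set xs \<subseteq> V \<and> length xs \<le> card V}"
  proof
    fix q assume "q \<in> ?Pth"
    then have q: "set q \<subseteq> V" "distinct q" unfolding is_path_def by auto
    have "length q = card (set q)" using distinct_card[OF q(2)] by simp
    also have "\<dots> \<le> card V" using card_mono[OF assms(1) q(1)] .
    finally show "q \<in> {xs. set xs \<subseteq> V \<and> length xs \<le> card V}" using q by simp
  qed
  have fin: "finite ?Pth" by (rule finite_subset[OF sub finite_lists_length_le[OF assms(1)]])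
  have sub2: "{card P | P. disjoint_paths V E v w P} \<subseteq> {..card ?Pth}"
  proof
    fix n assume "n \<in> {card P | P. disjoint_paths V E v w P}"
    then obtain P where nP: "n = card P" and dP: "disjoint_paths V E v w P" by blast
    have "P \<subseteq> ?Pth" using dP by (auto simp: disjoint_paths_def)
    then have "card P \<le> card ?Pth" by (rule card_mono[OF fin])
    then show "n \<in> {..card ?Pth}" using nP by simp
  qed
  have finS: "finite {card P | P. disjoint_paths V E v w P}"
    by (rule finite_subset[OF sub2]) simp
  have d1: "disjoint_paths V E v w {p}" using p unfolding disjoint_paths_def by simp
  have one: "1 \<in> {card P | P. disjoint_paths V E v w P}"
    by (intro CollectI exI[of _ "{p}"]) (simp add: d1)
  have ge: "1 \<le> Max {card P | P. disjoint_paths V E v w P}" using Max_ge[OF finS one] .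
  show ?thesis unfolding kappa_def zero_enat_def using assms(5) ge by simp
qed

lemma is_path_comp:
  assumes "C = comp V E c" "v \<in> C"
  shows "is_path V E v w p \<longleftrightarrow> is_path C (induced_edges E C) v w p"
proof
  assume p: "is_path V E v w p"
  have "set p \<subseteq> C"
  proof
    fix x assume x: "x \<in> set p"
    have "(v,x) \<in> E\<^sup>*" using path_reach[OF p x] .
    moreover have "(c,v) \<in> E\<^sup>*" "x \<in> V" using assms p x unfolding comp_def is_path_def by auto
    ultimately show "x \<in> C" using assms unfolding comp_def by (auto intro: rtrancl_trans)
  qed
  moreover have "(p ! i, p ! Suc i) \<in> C \<times> C" if "Suc i < length p" for i
    using \<open>set p \<subseteq> C\<close> that by (meson Suc_lessD nth_mem subsetD mem_Sigma_iff)
  ultimately show "is_path C (induced_edges E C) v w p" using p unfolding is_path_def induced_edges_def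
    by blast
next
  assume "is_path C (induced_edges E C) v w p"
  then show "is_path V E v w p" using assms unfolding is_path_def induced_edges_def comp_def by auto
qed

lemma kappa_comp:
  assumes "C = comp V E c" "v \<in> C"
  shows "kappa V E v w = kappa C (induced_edges E C) v w"
proof -
  have "disjoint_paths V E v w P = disjoint_paths C (induced_edges E C) v w P" for P
    unfolding disjoint_paths_def using is_path_comp[OF assms] by auto
  then show ?thesis unfolding kappa_def by simp
qed

lemma resolving_V: "resolving V E V"
  unfolding resolving_def
proof (intro conjI ballI impI subset_refl)
  fix v1 v2 assume "v1 \<in> V" "v2 \<in> V" "\<forall>w\<in>V. kappa V E v1 w = kappa V E v2 w"
  then have "kappa V E v2 v1 = \<infinity>" by (metis kappa_self)
  then show "v1 = v2" using kappa_ne_inf by metis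
qed

lemma cdim_le:
  assumes "finite V" "resolving V E W"
  shows "cdim V E \<le> card W"
proof -
  have "{card W | W. resolving V E W} \<subseteq> {..card V}"
    using card_mono[OF assms(1)] unfolding resolving_def by auto
  then have "finite {card W | W. resolving V E W}" using finite_subset by blast
  then show ?thesis unfolding cdim_def using assms(2) by (auto intro: Min_le)
qed

lemma cdim_attained:
  assumes "finite V"
  shows "\<exists>W. resolving V E W \<and> card W = cdim V E"
proof -
  have "{card W | W. resolving V E W} \<subseteq> {..card V}"
    using card_mono[OF assms(1)] unfolding resolving_def by auto
  then have "finite {card W | W. resolving V E W}" using finite_subset by blast
  moreover have "{card W | W. resolving V E W} \<noteq> {}" using resolving_V by blast
  ultimately have "cdim V E \<in> {card W | W. resolving V E W}" unfolding cdim_def by (rule Min_in)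
  then show ?thesis by auto
qed

lemma resolving_nonempty:
  assumes "finite C" "card C \<ge> 2" "resolving C E' W"
  shows "W \<noteq> {}"
proof
  assume "W = {}"
  then have "\<forall>a\<in>C. \<forall>b\<in>C. a = b" using assms(3) unfolding resolving_def by auto
  then have "card C \<le> Suc 0" using card_le_Suc0_iff_eq[OF assms(1)] by blast
  then show False using assms(2) by simp
qed


theorem mainTheorem1:
  fixes V :: "'a set" and E :: "('a \<times> 'a) set"
  assumes "graph V E"
  shows "cdim V E =
    (card {C \<in> components V E. card C = 1} - 1)
    + (\<Sum>C\<in>{C \<in> components V E. card C \<ge> 2}. cdim C (induced_edges E C))"
proof -
  have finV: "finite V" and EV: "E \<subseteq> V \<times> V" and symE: "sym E"
    using assms unfolding graph_def by auto
  define cp where "cp = comp V E"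
  define comps where "comps = components V E"
  define S1 where "S1 = {C \<in> comps. card C = 1}"
  define S2 where "S2 = {C \<in> comps. card C \<ge> 2}"
  define cd where "cd = (\<lambda>C. cdim C (induced_edges E C))"
  have comps_eq: "comps = cp ` V" unfolding comps_def cp_def by (rule components_comp)
  have finC: "finite comps" using comps_eq finV by simp
  have cpV: "cp v \<subseteq> V" for v unfolding cp_def comp_def by auto
  have cp_self: "v \<in> V \<Longrightarrow> v \<in> cp v" for v unfolding cp_def by (rule comp_self)
  have cp_mem: "x \<in> cp v \<Longrightarrow> cp x = cp v" for x v unfolding cp_def using comp_mem_eq[OF symE] by blast
  have cp_fin: "finite (cp v)" for v using cpV finV finite_subset by blast
  have inC: "C \<in> comps \<Longrightarrow> x \<in> C \<Longrightarrow> C = cp x" for C x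
    using comps_eq cp_mem by auto
  have cpC: "v \<in> V \<Longrightarrow> cp v \<in> comps" for v using comps_eq by auto
  have kz: "v \<in> V \<Longrightarrow> w \<in> V \<Longrightarrow> v \<noteq> w \<Longrightarrow> kappa V E v w = 0 \<longleftrightarrow> cp v \<noteq> cp w" for v w
    using kappa_zero[of v w E V] kappa_nonzero[OF finV EV, of v w] comp_eq_iff[OF symE, of v V w]
    unfolding cp_def by blast
  have kc: "v \<in> cp c \<Longrightarrow> kappa V E v w = kappa (cp c) (induced_edges E (cp c)) v w" for v w c
    unfolding cp_def by (rule kappa_comp) auto
  have S12: "comps = S1 \<union> S2" "S1 \<inter> S2 = {}"
  proof -
    have "C \<in> comps \<Longrightarrow> card C \<ge> 1" for C using comps_eq cp_self cp_fin
      by (auto simp: Suc_le_eq card_gt_0_iff)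
    then show "comps = S1 \<union> S2" unfolding S1_def S2_def by force
    show "S1 \<inter> S2 = {}" unfolding S1_def S2_def by auto
  qed
  have finS1: "finite S1" "finite S2" using S12 finC by auto
  have upper: "cdim V E \<le> (card S1 - 1) + (\<Sum>C\<in>S2. cd C)"
  proof -
    have "\<forall>C\<in>S2. \<exists>W. resolving C (induced_edges E C) W \<and> card W = cd C"
      unfolding cd_def using cdim_attained comps_eq cp_fin S2_def by auto
    then obtain Wc where Wc: "\<And>C. C \<in> S2 \<Longrightarrow> resolving C (induced_edges E C) (Wc C) \<and> card (Wc C) = cd C"
      by metis
    define C0 where "C0 = (SOME C. C \<in> S1)"
    define R where "R = \<Union>(S1 - {C0})"
    define W where "W = R \<union> (\<Union>C\<in>S2. Wc C)"
    have cardR: "card R \<le> card S1 - 1"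
    proof -
      have "card R \<le> (\<Sum>C\<in>S1 - {C0}. card C)" unfolding R_def
        using card_UN_le[of "S1 - {C0}" "\<lambda>C. C"] finS1 by simp
      also have "\<dots> = card (S1 - {C0})" unfolding S1_def by simp
      also have "\<dots> \<le> card S1 - 1"
      proof (cases "S1 = {}")
        case False then have "C0 \<in> S1" unfolding C0_def by (simp add: some_in_eq)
        then show ?thesis by (simp add: card_Diff_singleton_if)
      qed simp
      finally show ?thesis .
    qed
    have cardW: "card W \<le> card S1 - 1 + (\<Sum>C\<in>S2. cd C)"
    proof -
      have "card W \<le> card R + card (\<Union>C\<in>S2. Wc C)" unfolding W_def by (rule card_Un_le)
      also have "card (\<Union>C\<in>S2. Wc C) \<le> (\<Sum>C\<in>S2. card (Wc C))" using card_UN_le finS1 by blast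
      also have "(\<Sum>C\<in>S2. card (Wc C)) = (\<Sum>C\<in>S2. cd C)" using Wc by simp
      finally show ?thesis using cardR by simp
    qed
    have WcS: "C \<in> S2 \<Longrightarrow> Wc C \<subseteq> C" for C using Wc unfolding resolving_def by blast
    have S2V: "C \<in> S2 \<Longrightarrow> C \<subseteq> V" for C unfolding S2_def using comps_eq cpV by auto
    have S1V: "C \<in> S1 \<Longrightarrow> C \<subseteq> V" for C unfolding S1_def using comps_eq cpV by auto
    have WV: "W \<subseteq> V" unfolding W_def R_def using WcS S2V S1V by blast
    have key: "v1 = v2" if v1: "v1 \<in> V" "v1 \<notin> W" and v2: "v2 \<in> V" "v2 \<notin> W"
       and eq: "\<forall>w\<in>W. kappa V E v1 w = kappa V E v2 w" and c2: "cp v1 \<in> S2" for v1 v2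
    proof -
      let ?C = "cp v1"
      have "Wc ?C \<noteq> {}" using resolving_nonempty[of ?C "induced_edges E ?C" "Wc ?C"] Wc[OF c2] c2
        cp_fin unfolding S2_def by blast
      then obtain w where w: "w \<in> Wc ?C" by blast
      have wW: "w \<in> W" using w c2 unfolding W_def by blast
      have wC: "w \<in> ?C" using w WcS c2 by blast
      have cw: "cp w = cp v1" using cp_mem[OF wC] .
      have wV: "w \<in> V" using wC cpV by blast
      have "kappa V E v1 w \<noteq> 0" using kz[OF v1(1) wV] cw v1 wW by auto
      then have "kappa V E v2 w \<noteq> 0" using eq wW by simp
      then have "cp v2 = cp v1" using kz[OF v2(1) wV] cw v2 wW by auto
      then have v2C: "v2 \<in> ?C" using cp_self v2 by metis
      have v1C: "v1 \<in> ?C" using cp_self v1 by metis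
      have "\<forall>w'\<in>Wc ?C. kappa ?C (induced_edges E ?C) v1 w' = kappa ?C (induced_edges E ?C) v2 w'"
        using eq kc[OF v1C] kc[OF v2C] c2 unfolding W_def by auto
      then show ?thesis using Wc[OF c2] v1C v2C unfolding resolving_def by blast
    qed
    have "resolving V E W"
      unfolding resolving_def
    proof (intro conjI WV ballI impI)
      fix v1 v2 assume v1: "v1 \<in> V" and v2: "v2 \<in> V" and eq: "\<forall>w\<in>W. kappa V E v1 w = kappa V E v2 w"
      show "v1 = v2"
      proof (cases "v1 \<in> W \<or> v2 \<in> W")
        case True
        show ?thesis
        proof (cases "v1 \<in> W")
          case True
          then have "kappa V E v2 v1 = kappa V E v1 v1" using eq by simp
          then have "kappa V E v2 v1 = \<infinity>" by (simp add: kappa_self)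
          then show ?thesis using kappa_ne_inf[of v2 v1 V E] by blast
        next
          case False
          then have "v2 \<in> W" using True by blast
          then have "kappa V E v1 v2 = kappa V E v2 v2" using eq by simp
          then have "kappa V E v1 v2 = \<infinity>" by (simp add: kappa_self)
          then show ?thesis using kappa_ne_inf[of v1 v2 V E] by blast
        qed
      next
        case False
        then have n1: "v1 \<notin> W" "v2 \<notin> W" by auto
        have eq': "\<forall>w\<in>W. kappa V E v2 w = kappa V E v1 w" using eq by simp
        show ?thesis
        proof (cases "cp v1 \<in> S2")
          case True
          then show ?thesis using key[OF v1 n1(1) v2 n1(2) eq] by blast
        next
          case F1: False
          show ?thesis
          proof (cases "cp v2 \<in> S2")
            case True
            then show ?thesis using key[OF v2 n1(2) v1 n1(1) eq'] by simp
          next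
          case F2: False
          have s1: "cp v1 \<in> S1" "cp v2 \<in> S1" using F1 F2 S12(1) cpC[OF v1] cpC[OF v2] by auto
          have RW: "R \<subseteq> W" unfolding W_def by (rule Un_upper1)
          have "cp v1 = C0"
          proof (rule ccontr)
            assume "cp v1 \<noteq> C0"
            then have "cp v1 \<in> S1 - {C0}" using s1 by simp
            then have "v1 \<in> R" unfolding R_def using cp_self[OF v1] by (rule UnionI)
            then show False using RW n1 by blast
          qed
          moreover have "cp v2 = C0"
          proof (rule ccontr)
            assume "cp v2 \<noteq> C0"
            then have "cp v2 \<in> S1 - {C0}" using s1 by simp
            then have "v2 \<in> R" unfolding R_def using cp_self[OF v2] by (rule UnionI)
            then show False using RW n1 by blast
          qed
          ultimately have e: "cp v2 = cp v1" by simp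
          have c1: "card (cp v1) = 1" using s1(1) unfolding S1_def by simp
          obtain x where x: "cp v1 = {x}" using c1 by (auto simp: card_1_singleton_iff)
          have a1: "v1 \<in> {x}" using cp_self[OF v1] unfolding x .
          have a2: "v2 \<in> {x}" using cp_self[OF v2] unfolding e x .
          show ?thesis using a1 a2 by simp
          qed
        qed
      qed
    qed
    then show ?thesis using cdim_le[OF finV] cardW by (meson le_trans)
  qed
  have lower: "(card S1 - 1) + (\<Sum>C\<in>S2. cd C) \<le> cdim V E"
  proof -
    obtain W where W: "resolving V E W" "card W = cdim V E" using cdim_attained[OF finV] by blast
    have WV: "W \<subseteq> V" using W unfolding resolving_def by blast
    have finW: "finite W" using WV finV finite_subset by blast
    have compsV: "C \<in> comps \<Longrightarrow> C \<subseteq> V" for C using comps_eq cpV by auto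
    have WU: "W = (\<Union>C\<in>comps. W \<inter> C)"
    proof
      show "W \<subseteq> (\<Union>C\<in>comps. W \<inter> C)"
      proof
        fix x assume x: "x \<in> W"
        then have "x \<in> V" using WV by blast
        then have "cp x \<in> comps" "x \<in> cp x" using cpC cp_self by auto
        then show "x \<in> (\<Union>C\<in>comps. W \<inter> C)" using x by blast
      qed
    qed blast
    have disj: "\<forall>C\<in>comps. \<forall>D\<in>comps. C \<noteq> D \<longrightarrow> (W \<inter> C) \<inter> (W \<inter> D) = {}"
    proof (intro ballI impI)
      fix C D assume C: "C \<in> comps" and D: "D \<in> comps" and CD: "C \<noteq> D"
      show "(W \<inter> C) \<inter> (W \<inter> D) = {}"
      proof (rule ccontr)
        assume "(W \<inter> C) \<inter> (W \<inter> D) \<noteq> {}"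
        then obtain x where "x \<in> C" "x \<in> D" by blast
        then have "C = cp x" "D = cp x" using inC C D by auto
        then show False using CD by simp
      qed
    qed
    have finWC: "\<forall>C\<in>comps. finite (W \<inter> C)" using finW by simp
    have "card W = card (\<Union>C\<in>comps. W \<inter> C)" using WU by simp
    also have "\<dots> = (\<Sum>C\<in>comps. card (W \<inter> C))" by (rule card_UN_disjoint[OF finC finWC disj])
    also have "\<dots> = (\<Sum>C\<in>S1 \<union> S2. card (W \<inter> C))" using S12(1) by simp
    also have "\<dots> = (\<Sum>C\<in>S1. card (W \<inter> C)) + (\<Sum>C\<in>S2. card (W \<inter> C))"
      by (rule sum.union_disjoint[OF finS1(1) finS1(2) S12(2)])
    finally have cW: "card W = (\<Sum>C\<in>S1. card (W \<inter> C)) + (\<Sum>C\<in>S2. card (W \<inter> C))" .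
    have p2: "cd C \<le> card (W \<inter> C)" if C: "C \<in> S2" for C
    proof -
      have Cc: "C \<in> comps" using C unfolding S2_def by auto
      then obtain c where c: "C = cp c" "c \<in> V" using comps_eq by auto
      have "resolving C (induced_edges E C) (W \<inter> C)"
        unfolding resolving_def
      proof (intro conjI ballI impI)
        show "W \<inter> C \<subseteq> C" by blast
        fix v1 v2 assume v1: "v1 \<in> C" and v2: "v2 \<in> C"
          and eq: "\<forall>w\<in>W \<inter> C. kappa C (induced_edges E C) v1 w = kappa C (induced_edges E C) v2 w"
        have "\<forall>w\<in>W. kappa V E v1 w = kappa V E v2 w"
        proof
          fix w assume w: "w \<in> W"
          show "kappa V E v1 w = kappa V E v2 w"
          proof (cases "w \<in> C")
            case True
            then show ?thesis using eq w kc[of v1 c w] kc[of v2 c w] c v1 v2 by auto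
          next
            case False
            have "v1 \<in> V" "v2 \<in> V" "w \<in> V" using v1 v2 w WV compsV[OF Cc] by auto
            moreover have "cp v1 = C" "cp v2 = C" using inC[OF Cc] v1 v2 by auto
            moreover have "w \<notin> cp v1" "w \<notin> cp v2" using False calculation by auto
            moreover have "cp w \<noteq> C" using False cp_self \<open>w \<in> V\<close> by metis
            ultimately show ?thesis using kz by (metis False v1 v2)
          qed
        qed
        then show "v1 = v2" using W(1) v1 v2 compsV[OF Cc] unfolding resolving_def by blast
      qed
      then show ?thesis unfolding cd_def by (rule cdim_le[OF finite_subset[OF compsV[OF Cc] finV]])
    qed
    define Z where "Z = {C \<in> S1. W \<inter> C = {}}"
    have finZ: "finite Z" using finS1 unfolding Z_def by auto
    have cZ: "card Z \<le> Suc 0"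
      unfolding card_le_Suc0_iff_eq[OF finZ]
    proof (intro ballI)
      fix C D assume C: "C \<in> Z" and D: "D \<in> Z"
      obtain a where a: "C = {a}" using C unfolding Z_def S1_def by (auto simp: card_1_singleton_iff)
      obtain b where b: "D = {b}" using D unfolding Z_def S1_def by (auto simp: card_1_singleton_iff)
      have Cc: "C \<in> comps" "D \<in> comps" using C D unfolding Z_def S1_def by auto
      have aV: "a \<in> V" "b \<in> V" using compsV Cc a b by auto
      have ca: "cp a = {a}" "cp b = {b}" using inC[OF Cc(1), of a] inC[OF Cc(2), of b] a b by auto
      have "\<forall>w\<in>W. kappa V E a w = kappa V E b w"
      proof
        fix w assume w: "w \<in> W"
        have wa: "w \<noteq> a" "w \<noteq> b" using w C D a b unfolding Z_def by auto
        have wV: "w \<in> V" using w WV by auto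
        have ww: "w \<in> cp w" using cp_self[OF wV] .
        have n1: "cp a \<noteq> cp w" using ww wa ca by auto
        have n2: "cp b \<noteq> cp w" using ww wa ca by auto
        have k1: "kappa V E a w = 0" using kz[OF aV(1) wV] wa n1 by auto
        have k2: "kappa V E b w = 0" using kz[OF aV(2) wV] wa n2 by auto
        show "kappa V E a w = kappa V E b w" using k1 k2 by simp
      qed
      then have "a = b" using W(1) aV unfolding resolving_def by blast
      then show "C = D" using a b by simp
    qed
    have "card S1 - 1 \<le> card (S1 - Z)" using diff_card_le_card_Diff[OF finZ, of S1] cZ by simp
    also have "card (S1 - Z) = (\<Sum>C\<in>S1 - Z. 1)" by simp
    also have "\<dots> \<le> (\<Sum>C\<in>S1 - Z. card (W \<inter> C))"
    proof (rule sum_mono)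
      fix C assume "C \<in> S1 - Z"
      then have "W \<inter> C \<noteq> {}" unfolding Z_def by auto
      then show "1 \<le> card (W \<inter> C)" using finW by (simp add: Suc_le_eq card_gt_0_iff)
    qed
    also have "\<dots> \<le> (\<Sum>C\<in>S1. card (W \<inter> C))" using finS1 by (intro sum_mono2) auto
    finally have p1: "card S1 - 1 \<le> (\<Sum>C\<in>S1. card (W \<inter> C))" .
    have "(\<Sum>C\<in>S2. cd C) \<le> (\<Sum>C\<in>S2. card (W \<inter> C))" using p2 by (rule sum_mono)
    then show ?thesis using p1 cW W(2) by linarith
  qed
  show ?thesis using upper lower unfolding S1_def S2_def comps_def cd_def by linarith
qed

end
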